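(* In the $q$-boson algebra $\mathcal H_n$ with $z=1$ (site indices read modulo $n$, so $\beta_0=\beta_n$, $\beta^*_{n+1}=\beta^*_1$), for every $j=1,\dots,n$ one has the identities of formal power series in $v$ $$Q^-(v)\beta_j-\beta_jQ^-(v)=-v\,\beta_{j-1}\big[Q^-(v)-\beta_jQ^-(v)\beta_j^*\big],$$ $$Q^-(v)\beta_j^*-\beta_j^*Q^-(v)=v\big[Q^-(v)-\beta_jQ^-(v)\beta_j^*\big]\beta^*_{j+1}.$$
   Context: $q$ is an indeterminate, $n\ge1$. $\mathcal H_n$ is the $\mathbb C(q)$-algebra generated by $\beta_i,\beta_i^*,q^{\pm N_i}$ ($i=1,\dots,n$) with relations: $q^{\pm N_i}$ mutually inverse and commuting, $q^{N_i}\beta_j=q^{-\delta_{ij}}\beta_jq^{N_i}$, $q^{N_i}\beta_j^*=q^{\delta_{ij}}\beta^*_jq^{N_i}$, $\beta_i\beta_j^*-\beta_j^*\beta_i=\delta_{ij}(1-q^2)q^{2N_i}$, $\beta_i\beta_i^*-q^2\beta_i^*\beta_i=1-q^2$, generators at different sites commute. $(q^2)_m=\prod_{j=1}^m(1-q^{2j})$. $Q^-(v)=\sum_{r\ge0}Q^-_rv^r$ with $$Q^-_r=\sum_{\alpha}z^{\alpha_n}\frac{\beta_n^{\alpha_n}(\beta_{n-1}\beta_n^* )^{\alpha_{n-1}}\cdots(\beta_1\beta_2^* )^{\alpha_1}(\beta_1^* )^{\alpha_n}}{(q^2)_{\alpha_1}\cdots(q^2)_{\alpha_n}}\prod_{i=1}^nq^{\alpha_i(\alpha_i+1)},$$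 summed over compositions $\alpha\in\mathbb Z^n_{\ge0}$ of $r$ (here $z=1$). *)

theory Defs
  imports Complex_Main "HOL-Computational_Algebra.Polynomial" "HOL-Computational_Algebra.Fraction_Field"
    "HOL-Computational_Algebra.Formal_Power_Series"
begin

type_synonym Cq = "complex poly fract"

definition qq :: Cq where "qq = Fract [:0, 1:] 1"

definition qpoch :: "nat \<Rightarrow> Cq" where
  "qpoch m = (\<Prod>j=1..m. 1 - qq ^ (2 * j))"

definition site_pred :: "nat \<Rightarrow> nat \<Rightarrow> nat" where
  "site_pred n j = (if j = 1 then n else j - 1)"
definition site_succ :: "nat \<Rightarrow> nat \<Rightarrow> nat" where
  "site_succ n j = (if j = n then 1 else j + 1)"

text \<open>A C(q)-algebra A (a ring_1 together with a unital ring homomorphism phi from C(q)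
  into the centre of A) containing elements beta i, beta* i, q^{N_i}, q^{-N_i} (i = 1..n)
  satisfying the defining relations of the q-boson algebra H_n.  Any such data is the
  same as a C(q)-algebra homomorphism H_n -> A; H_n itself is one instance.\<close>
definition qboson_alg ::
  "nat \<Rightarrow> (Cq \<Rightarrow> 'a::ring_1) \<Rightarrow> (nat \<Rightarrow> 'a) \<Rightarrow> (nat \<Rightarrow> 'a) \<Rightarrow> (nat \<Rightarrow> 'a) \<Rightarrow> (nat \<Rightarrow> 'a) \<Rightarrow> bool"
where
  "qboson_alg n \<phi> \<beta> \<beta>s K Ki \<longleftrightarrow>
     (\<forall>x y. \<phi> (x + y) = \<phi> x + \<phi> y) \<and> (\<forall>x y. \<phi> (x * y) = \<phi> x * \<phi> y) \<and> \<phi> 1 = 1 \<and>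
     (\<forall>c a. \<phi> c * a = a * \<phi> c) \<and>
     (\<forall>i\<in>{1..n}. \<forall>j\<in>{1..n}.
        K i * Ki i = 1 \<and> Ki i * K i = 1 \<and>
        K i * K j = K j * K i \<and> K i * Ki j = Ki j * K i \<and> Ki i * Ki j = Ki j * Ki i \<and>
        K i * \<beta> j = \<phi> (if i = j then inverse qq else 1) * \<beta> j * K i \<and>
        K i * \<beta>s j = \<phi> (if i = j then qq else 1) * \<beta>s j * K i \<and>
        \<beta> i * \<beta>s j - \<beta>s j * \<beta> i = (if i = j then \<phi> (1 - qq ^ 2) * K i ^ 2 else 0) \<and>
        (i \<noteq> j \<longrightarrow> \<beta> i * \<beta> j = \<beta> j * \<beta> i \<and> \<beta>s i * \<beta>s j = \<beta>s j * \<beta>s i \<and>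
                   Ki i * \<beta> j = \<beta> j * Ki i \<and> Ki i * \<beta>s j = \<beta>s j * Ki i)) \<and>
     (\<forall>i\<in>{1..n}. \<beta> i * \<beta>s i - \<phi> (qq ^ 2) * \<beta>s i * \<beta> i = \<phi> (1 - qq ^ 2))"

definition compositions :: "nat \<Rightarrow> nat \<Rightarrow> (nat \<Rightarrow> nat) set" where
  "compositions n r = {\<alpha>. (\<forall>i. i \<notin> {1..n} \<longrightarrow> \<alpha> i = 0) \<and> (\<Sum>i=1..n. \<alpha> i) = r}"

definition Qminus_coeff ::
  "nat \<Rightarrow> (Cq \<Rightarrow> 'a::ring_1) \<Rightarrow> (nat \<Rightarrow> 'a) \<Rightarrow> (nat \<Rightarrow> 'a) \<Rightarrow> nat \<Rightarrow> 'a" where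
  "Qminus_coeff n \<phi> \<beta> \<beta>s r =
     (\<Sum>\<alpha>\<in>compositions n r.
        \<phi> ((\<Prod>i=1..n. qq ^ (\<alpha> i * (\<alpha> i + 1))) / (\<Prod>i=1..n. qpoch (\<alpha> i))) *
        (\<beta> n ^ \<alpha> n *
         prod_list (map (\<lambda>i. (\<beta> i * \<beta>s (i + 1)) ^ \<alpha> i) (rev [1..<n])) *
         \<beta>s 1 ^ \<alpha> n))"

definition Qminus ::
  "nat \<Rightarrow> (Cq \<Rightarrow> 'a::ring_1) \<Rightarrow> (nat \<Rightarrow> 'a) \<Rightarrow> (nat \<Rightarrow> 'a) \<Rightarrow> 'a fps" where
  "Qminus n \<phi> \<beta> \<beta>s = Abs_fps (Qminus_coeff n \<phi> \<beta> \<beta>s)"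

end

theory Submission
  imports Defs
begin

declare upt_Suc[simp del]

lemma qq_pow: "qq ^ k = Fract ([:0,1:] ^ k) 1"
  by (induction k) (simp_all add: qq_def One_fract_def)

lemma qq_pow_neq1: "k > 0 \<Longrightarrow> qq ^ k \<noteq> 1"
proof
  assume k: "k > 0" and "qq ^ k = 1"
  hence "([:0,1:] :: complex poly) ^ k = 1" by (simp add: qq_pow One_fract_def eq_fract)
  hence "degree (([:0,1:] :: complex poly) ^ k) = 0" by simp
  with k show False by (subst (asm) degree_power_eq) auto
qed

lemma qq_neq0: "qq \<noteq> 0"
  by (simp add: qq_def Zero_fract_def eq_fract)

lemma qpoch_Suc: "qpoch (Suc a) = qpoch a * (1 - qq ^ (2 * Suc a))"
  unfolding qpoch_def by (simp add: prod.atLeast1_atMost_eq prod.nat_ivl_Suc' )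

lemma qpoch_neq0: "qpoch a \<noteq> 0"
proof (induction a)
  case (Suc a)
  have "qq ^ (2 * Suc a) \<noteq> 1" by (rule qq_pow_neq1) simp
  with Suc show ?case by (simp only: qpoch_Suc) simp
qed (simp add: qpoch_def)

lemma map_upd_notin: "i \<notin> set ys \<Longrightarrow> map (f(i := w)) ys = map f ys"
  by (auto intro: map_cong)

lemma pl_mult_left:
  "distinct xs \<Longrightarrow> i \<in> set xs \<Longrightarrow> (\<forall>k\<in>set xs. k \<noteq> i \<longrightarrow> x * f k = f k * x) \<Longrightarrow>
   x * prod_list (map f xs) = prod_list (map (f(i := x * f i)) xs)"
proof (induction xs)
  case (Cons a ys)
  show ?case
  proof (cases "a = i")
    case True
    with Cons.prems have "i \<notin> set ys" by auto
    with True show ?thesis by (simp add: mult.assoc map_upd_notin fun_upd_same del: fun_upd_apply)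
  next
    case False
    with Cons.prems have "i \<in> set ys" "x * f a = f a * x" by auto
    with Cons False show ?thesis by (simp flip: mult.assoc) (simp add: mult.assoc)
  qed
qed simp

lemma pl_mult_right:
  "distinct xs \<Longrightarrow> i \<in> set xs \<Longrightarrow> (\<forall>k\<in>set xs. k \<noteq> i \<longrightarrow> x * f k = f k * x) \<Longrightarrow>
   prod_list (map f xs) * x = prod_list (map (f(i := f i * x)) xs)"
proof (induction xs)
  case (Cons a ys)
  show ?case
  proof (cases "a = i")
    case True
    with Cons.prems have "i \<notin> set ys" by auto
    hence "map (f(i := f i * x)) ys = map f ys" by (auto intro: map_cong)
    moreover have "prod_list (map f ys) * x = x * prod_list (map f ys)"
      using Cons.prems True
    proof (induction ys)
      case (Cons b zs)
      hence "x * f b = f b * x" by auto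
      with Cons show ?case by (simp add: mult.assoc) (metis mult.assoc)
    qed simp
    ultimately show ?thesis using True \<open>i \<notin> set ys\<close> by (simp add: mult.assoc map_upd_notin fun_upd_same del: fun_upd_apply)
  next
    case False
    with Cons.prems have "i \<in> set ys" by auto
    with Cons False show ?thesis by (simp add: mult.assoc)
  qed
qed simp

lemma pl_diff:
  "distinct xs \<Longrightarrow> i \<in> set xs \<Longrightarrow>
   prod_list (map (f(i := (u::'a::ring_1) - v)) xs) = prod_list (map (f(i := u)) xs) - prod_list (map (f(i := v)) xs)"
proof (induction xs)
  case (Cons a ys)
  show ?case
  proof (cases "a = i")
    case True
    with Cons.prems have "i \<notin> set ys" by auto
    with True show ?thesis by (simp add: map_upd_notin fun_upd_same del: fun_upd_apply) (simp add: left_diff_distrib)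
  next
    case False
    with Cons.prems have "i \<in> set ys" by auto
    with Cons False show ?thesis by (simp add: right_diff_distrib)
  qed
qed simp

lemma pl_scal:
  "distinct xs \<Longrightarrow> i \<in> set xs \<Longrightarrow> (\<forall>y. c * y = y * c) \<Longrightarrow>
   prod_list (map (f(i := c * u)) xs) = c * prod_list (map (f(i := u)) xs)"
proof (induction xs)
  case (Cons a ys)
  show ?case
  proof (cases "a = i")
    case True
    with Cons.prems have "i \<notin> set ys" by auto
    with True show ?thesis by (simp add: mult.assoc map_upd_notin fun_upd_same del: fun_upd_apply)
  next
    case False
    with Cons.prems have "i \<in> set ys" by auto
    with Cons False show ?thesis by (simp flip: mult.assoc) (metis mult.assoc)
  qed
qed simp

inductive_set loc :: "(nat \<Rightarrow> 'a::ring_1) \<Rightarrow> (nat \<Rightarrow> 'a) \<Rightarrow> nat \<Rightarrow> 'a set"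
  for \<beta> \<beta>s k where
  loc_b: "\<beta> k \<in> loc \<beta> \<beta>s k"
| loc_bs: "\<beta>s k \<in> loc \<beta> \<beta>s k"
| loc_one: "1 \<in> loc \<beta> \<beta>s k"
| loc_mult: "x \<in> loc \<beta> \<beta>s k \<Longrightarrow> y \<in> loc \<beta> \<beta>s k \<Longrightarrow> x * y \<in> loc \<beta> \<beta>s k"
| loc_diff: "x \<in> loc \<beta> \<beta>s k \<Longrightarrow> y \<in> loc \<beta> \<beta>s k \<Longrightarrow> x - y \<in> loc \<beta> \<beta>s k"

lemma loc_pow: "x \<in> loc \<beta> \<beta>s k \<Longrightarrow> x ^ m \<in> loc \<beta> \<beta>s k"
  by (induction m) (auto intro: loc.intros)

definition eps :: "nat \<Rightarrow> Cq" where "eps m = (1 - qq ^ (2 * m)) / qq ^ (2 * m)"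

lemma power_mult_comm: "x * y = y * x \<Longrightarrow> (x * y) ^ a = x ^ a * (y ^ a :: 'a::monoid_mult)"
proof (induction a)
  case (Suc a)
  have "(x * y) ^ Suc a = x * y * (x ^ a * y ^ a)" using Suc by simp
  also have "\<dots> = x * (x ^ a * y) * y ^ a" using power_commuting_commutes[OF Suc.prems, of a]
    by (metis mult.assoc)
  finally show ?case by (simp add: mult.assoc)
qed simp

lemma sum_upd_nat: "finite A \<Longrightarrow> i \<in> A \<Longrightarrow> sum (f(i := v)) A + f i = sum f A + (v::nat)"
  by (simp add: sum.remove[of A i] sum.cong[of "A - {i}" "A - {i}" "f(i := v)" f])

lemma comp_fin: "finite (compositions n r)"
proof (rule finite_subset)
  show "compositions n r \<subseteq> {f. \<forall>x. (x \<in> {1..n} \<longrightarrow> f x \<in> {0..r}) \<and> (x \<notin> {1..n} \<longrightarrow> f x = 0)}"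
  proof safe
    fix f x assume f: "f \<in> compositions n r" and x: "x \<in> {1..n}"
    have "f x \<le> (\<Sum>i=1..n. f i)" using x by (intro member_le_sum) auto
    with f show "f x \<in> {0..r}" by (simp add: compositions_def)
  qed (auto simp: compositions_def)
qed (intro finite_set_of_finite_funs; simp)

lemma comp_upd: "i \<in> {1..n} \<Longrightarrow> \<gamma> \<in> compositions n r \<Longrightarrow> \<gamma>(i := Suc (\<gamma> i)) \<in> compositions n (Suc r)"
  unfolding compositions_def using sum_upd_nat[of "{1..n}" i \<gamma> "Suc (\<gamma> i)"] by auto

lemma comp_dn: "i \<in> {1..n} \<Longrightarrow> \<alpha> \<in> compositions n (Suc r) \<Longrightarrow> 0 < \<alpha> i \<Longrightarrow> \<alpha>(i := \<alpha> i - Suc 0) \<in> compositions n r"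
  unfolding compositions_def using sum_upd_nat[of "{1..n}" i \<alpha> "\<alpha> i - Suc 0"] by auto

lemma comp_reindex:
  assumes i: "i \<in> {1..n}" and z: "\<forall>\<alpha>\<in>compositions n (Suc r). \<alpha> i = 0 \<longrightarrow> g \<alpha> = (0::'a::comm_monoid_add)"
  shows "(\<Sum>\<alpha>\<in>compositions n (Suc r). g \<alpha>) = (\<Sum>\<gamma>\<in>compositions n r. g (\<gamma>(i := Suc (\<gamma> i))))"
proof -
  have "(\<Sum>\<alpha>\<in>compositions n (Suc r). g \<alpha>) = (\<Sum>\<alpha>\<in>{\<alpha>\<in>compositions n (Suc r). \<alpha> i \<noteq> 0}. g \<alpha>)"
    using z comp_fin by (intro sum.mono_neutral_right) auto
  also have "\<dots> = (\<Sum>\<gamma>\<in>compositions n r. g (\<gamma>(i := Suc (\<gamma> i))))"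
    by (rule sum.reindex_bij_witness[where j = "\<lambda>\<alpha>. \<alpha>(i := \<alpha> i - 1)" and i = "\<lambda>\<gamma>. \<gamma>(i := Suc (\<gamma> i))"])
       (auto simp: comp_upd[OF i] intro: comp_dn[OF i])
  finally show ?thesis .
qed

lemma prod_upd: "finite A \<Longrightarrow> i \<in> A \<Longrightarrow> (\<Prod>k\<in>A. h ((\<gamma>(i := v)) k)) = h v * (\<Prod>k\<in>A - {i}. h (\<gamma> k :: nat) :: 'b::comm_monoid_mult)"
proof -
  assume A: "finite A" "i \<in> A"
  have "(\<Prod>k\<in>A. h ((\<gamma>(i := v)) k)) = h ((\<gamma>(i := v)) i) * (\<Prod>k\<in>A - {i}. h ((\<gamma>(i := v)) k))"
    using A by (rule prod.remove)
  also have "(\<Prod>k\<in>A - {i}. h ((\<gamma>(i := v)) k)) = (\<Prod>k\<in>A - {i}. h (\<gamma> k))"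
    by (intro prod.cong) auto
  finally show ?thesis by simp
qed

lemma Cw_step:
  fixes \<gamma> :: "nat \<Rightarrow> nat"
  assumes i: "i \<in> {1..n}"
  shows "(\<Prod>k=1..n. qq ^ ((\<gamma>(i := Suc (\<gamma> i))) k * ((\<gamma>(i := Suc (\<gamma> i))) k + 1))) / (\<Prod>k=1..n. qpoch ((\<gamma>(i := Suc (\<gamma> i))) k))
         * eps (Suc (\<gamma> i)) = (\<Prod>k=1..n. qq ^ (\<gamma> k * (\<gamma> k + 1))) / (\<Prod>k=1..n. qpoch (\<gamma> k))"
proof -
  let ?a = "\<gamma> i" and ?A = "{1..n} - {i}"
  let ?N = "\<Prod>k\<in>?A. qq ^ (\<gamma> k * (\<gamma> k + 1))" and ?M = "\<Prod>k\<in>?A. qpoch (\<gamma> k)"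
  have e1: "(\<Prod>k=1..n. qq ^ ((\<gamma>(i := Suc ?a)) k * ((\<gamma>(i := Suc ?a)) k + 1))) = qq ^ (Suc ?a * (Suc ?a + 1)) * ?N"
    using i prod_upd[of "{1..n}" i "\<lambda>x. qq ^ (x * (x + 1))"] by simp
  have e2: "(\<Prod>k=1..n. qpoch ((\<gamma>(i := Suc ?a)) k)) = qpoch (Suc ?a) * ?M"
    using i prod_upd[of "{1..n}" i "\<lambda>x. qpoch x"] by simp
  have e3: "(\<Prod>k=1..n. qq ^ (\<gamma> k * (\<gamma> k + 1))) = qq ^ (?a * (?a + 1)) * ?N"
    using i by (intro prod.remove) auto
  have e4: "(\<Prod>k=1..n. qpoch (\<gamma> k)) = qpoch ?a * ?M"
    using i by (intro prod.remove) auto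
  have M: "?M \<noteq> 0" using qpoch_neq0 by (simp add: prod_zero_iff)
  have pa: "qpoch ?a \<noteq> 0" by (rule qpoch_neq0)
  have q1: "1 - qq ^ (2 * Suc ?a) \<noteq> 0" using qq_pow_neq1[of "2 * Suc ?a"] by simp
  have q2: "qq ^ (2 * Suc ?a) \<noteq> 0" using qq_neq0 by simp
  have pw: "qq ^ (Suc ?a * (Suc ?a + 1)) = qq ^ (?a * (?a + 1)) * qq ^ (2 * Suc ?a)"
  proof -
    have "Suc ?a * (Suc ?a + 1) = ?a * (?a + 1) + 2 * Suc ?a" by (simp add: algebra_simps)
    thus ?thesis by (simp only: power_add)
  qed
  have gen: "\<And>A x N P y M'::Cq. x \<noteq> 0 \<Longrightarrow> y \<noteq> 0 \<Longrightarrow> (A * x * N) / (P * y * M') * (y / x) = (A * N) / (P * M')"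
    by (simp add: divide_simps)
  show ?thesis unfolding e1 e2 e3 e4 qpoch_Suc eps_def pw
    by (rule gen[OF q2 q1])
qed

lemma sp_in: "j \<in> {1..n} \<Longrightarrow> site_pred n j \<in> {1..n}" by (auto simp: site_pred_def)
lemma ss_in: "j \<in> {1..n} \<Longrightarrow> site_succ n j \<in> {1..n}" by (auto simp: site_succ_def)
lemma sp_ne: "2 \<le> n \<Longrightarrow> j \<in> {1..n} \<Longrightarrow> site_pred n j \<noteq> j" by (auto simp: site_pred_def)
lemma ss_ne: "2 \<le> n \<Longrightarrow> j \<in> {1..n} \<Longrightarrow> site_succ n j \<noteq> j" by (auto simp: site_succ_def)
lemma sp_ss: "j \<in> {1..n} \<Longrightarrow> site_pred n (site_succ n j) = j" by (auto simp: site_pred_def site_succ_def)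
lemma sp_inj: "j \<in> {1..n} \<Longrightarrow> k \<in> {1..n} \<Longrightarrow> site_pred n k = site_pred n j \<Longrightarrow> k = j"
  by (auto simp: site_pred_def split: if_splits)
lemma site_one: "n = 1 \<Longrightarrow> j \<in> {1..n} \<Longrightarrow> site_pred n j = j \<and> site_succ n j = j"
  by (auto simp: site_pred_def site_succ_def)

locale qb =
  fixes n :: nat and \<phi> :: "Cq \<Rightarrow> 'a::ring_1" and \<beta> \<beta>s K Ki :: "nat \<Rightarrow> 'a"
  assumes alg: "qboson_alg n \<phi> \<beta> \<beta>s K Ki" and n1: "n \<ge> 1"
begin

lemma phi_add: "\<phi> (x + y) = \<phi> x + \<phi> y"
  using alg[unfolded qboson_alg_def, THEN conjunct1] by blast
lemma phi_mult: "\<phi> (x * y) = \<phi> x * \<phi> y"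
  using alg[unfolded qboson_alg_def, THEN conjunct2, THEN conjunct1] by blast
lemma phi_one: "\<phi> 1 = 1"
  using alg[unfolded qboson_alg_def, THEN conjunct2, THEN conjunct2, THEN conjunct1] .
lemma phi_central: "\<phi> c * a = a * \<phi> c"
  using alg[unfolded qboson_alg_def, THEN conjunct2, THEN conjunct2, THEN conjunct2, THEN conjunct1] by blast
lemma phi_zero: "\<phi> 0 = 0"
  using phi_add[of 0 0] by simp
lemma phi_diff: "\<phi> (x - y) = \<phi> x - \<phi> y"
  using phi_add[of "x - y" y] by (simp add: algebra_simps)
lemma phi_minus: "\<phi> (- x) = - \<phi> x"
  using phi_diff[of 0 x] by (simp add: phi_zero)
lemma phi_inv: "x \<noteq> 0 \<Longrightarrow> \<phi> (inverse x) * \<phi> x = 1"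
  by (simp flip: phi_mult add: phi_one)

lemma site_rels: "i \<in> {1..n} \<Longrightarrow> k \<in> {1..n} \<Longrightarrow>
   \<beta> i * \<beta>s k - \<beta>s k * \<beta> i = (if i = k then \<phi> (1 - qq ^ 2) * K i ^ 2 else 0) \<and>
        (i \<noteq> k \<longrightarrow> \<beta> i * \<beta> k = \<beta> k * \<beta> i \<and> \<beta>s i * \<beta>s k = \<beta>s k * \<beta>s i)"
proof -
  assume ik: "i \<in> {1..n}" "k \<in> {1..n}"
  note h = alg[unfolded qboson_alg_def, THEN conjunct2, THEN conjunct2, THEN conjunct2, THEN conjunct2, THEN conjunct1]
  note h2 = bspec[OF bspec[OF h ik(1)] ik(2)]
  show ?thesis using h2 by blast
qed

lemma com_b: "i \<in> {1..n} \<Longrightarrow> k \<in> {1..n} \<Longrightarrow> i \<noteq> k \<Longrightarrow> \<beta> i * \<beta> k = \<beta> k * \<beta> i"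
  using site_rels by blast
lemma com_bs: "i \<in> {1..n} \<Longrightarrow> k \<in> {1..n} \<Longrightarrow> i \<noteq> k \<Longrightarrow> \<beta>s i * \<beta>s k = \<beta>s k * \<beta>s i"
  using site_rels by blast
lemma com_b_bs: "i \<in> {1..n} \<Longrightarrow> k \<in> {1..n} \<Longrightarrow> i \<noteq> k \<Longrightarrow> \<beta> i * \<beta>s k = \<beta>s k * \<beta> i"
  using site_rels[of i k] by simp
lemma rel: "i \<in> {1..n} \<Longrightarrow> \<beta> i * \<beta>s i = \<phi> (qq ^ 2) * \<beta>s i * \<beta> i + \<phi> (1 - qq ^ 2)"
proof -
  assume "i \<in> {1..n}"
  with alg[unfolded qboson_alg_def, THEN conjunct2, THEN conjunct2, THEN conjunct2, THEN conjunct2, THEN conjunct2]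
  have "\<beta> i * \<beta>s i - \<phi> (qq ^ 2) * \<beta>s i * \<beta> i = \<phi> (1 - qq ^ 2)"
    by (rule bspec)
  thus ?thesis by (simp add: algebra_simps)
qed

lemma loc_comm_gen:
  assumes "i \<in> {1..n}" "k \<in> {1..n}" "i \<noteq> k" "x \<in> loc \<beta> \<beta>s k"
  shows "x * \<beta> i = \<beta> i * x \<and> x * \<beta>s i = \<beta>s i * x"
  using assms(4)
proof induction
  case loc_b then show ?case using assms com_b com_b_bs by metis
next
  case loc_bs then show ?case using assms com_bs com_b_bs by metis
next
  case (loc_mult x y) then show ?case by (metis mult.assoc)
next
  case (loc_diff x y) then show ?case by (simp add: algebra_simps)
qed simp

lemma loc_comm:
  assumes "i \<in> {1..n}" "k \<in> {1..n}" "i \<noteq> k" "x \<in> loc \<beta> \<beta>s k" "y \<in> loc \<beta> \<beta>s i"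
  shows "x * y = y * x"
  using assms(5)
proof induction
  case loc_b then show ?case using loc_comm_gen assms by blast
next
  case loc_bs then show ?case using loc_comm_gen assms by blast
next
  case (loc_mult x' y') then show ?case by (metis mult.assoc)
next
  case (loc_diff x' y') then show ?case by (simp add: algebra_simps)
qed simp

lemma phi_lc: "a * (\<phi> c * b) = \<phi> c * (a * b)"
  by (metis mult.assoc phi_central)

lemma hl1: "x * (\<phi> a * w + \<phi> c) = \<phi> a * (x * w) + \<phi> c * x"
  by (simp only: distrib_left phi_lc phi_central[of c x, symmetric])

lemma hl2: "(\<phi> a * w + \<phi> c) * x = \<phi> a * (w * x) + \<phi> c * x"
  by (simp only: distrib_right mult.assoc)

lemma relA:
  assumes i: "i \<in> {1..n}"
  shows "\<beta> i * \<beta>s i ^ Suc b = \<phi> (qq ^ (2 * Suc b)) * (\<beta>s i ^ Suc b * \<beta> i) + \<phi> (1 - qq ^ (2 * Suc b)) * \<beta>s i ^ b"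
proof (induction b)
  case 0
  then show ?case using rel[OF i] by (simp add: mult.assoc)
next
  case (Suc b)
  let ?s = "\<phi> (qq ^ (2 * Suc b))" and ?t = "\<phi> (1 - qq ^ (2 * Suc b))"
  have "\<beta> i * \<beta>s i ^ Suc (Suc b) = (\<beta> i * \<beta>s i ^ Suc b) * \<beta>s i"
    by (simp only: power_Suc2[of _ "Suc b"] mult.assoc)
  also have "\<dots> = (?s * (\<beta>s i ^ Suc b * \<beta> i) + ?t * \<beta>s i ^ b) * \<beta>s i"
    by (simp only: Suc)
  also have "\<dots> = ?s * (\<beta>s i ^ Suc b * (\<beta> i * \<beta>s i)) + ?t * \<beta>s i ^ Suc b"
    by (simp add: distrib_right mult.assoc power_Suc2 power_commutes)
  also have "\<dots> = ?s * (\<beta>s i ^ Suc b * (\<phi> (qq ^ 2) * (\<beta>s i * \<beta> i) + \<phi> (1 - qq ^ 2))) + ?t * \<beta>s i ^ Suc b"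
    using rel[OF i] by (simp add: mult.assoc)
  also have "\<dots> = (?s * \<phi> (qq ^ 2)) * (\<beta>s i ^ Suc b * (\<beta>s i * \<beta> i)) + (?s * \<phi> (1 - qq ^ 2) + ?t) * \<beta>s i ^ Suc b"
    unfolding hl1 by (simp only: distrib_left distrib_right mult.assoc add.assoc)
  also have "\<beta>s i ^ Suc b * (\<beta>s i * \<beta> i) = \<beta>s i ^ Suc (Suc b) * \<beta> i"
    by (simp only: power_Suc2[of "\<beta>s i" "Suc b"] mult.assoc)
  also have "?s * \<phi> (qq ^ 2) = \<phi> (qq ^ (2 * Suc (Suc b)))"
  proof -
    have "2 * Suc (Suc b) = 2 * Suc b + 2" by simp
    thus ?thesis by (simp only: phi_mult[symmetric] power_add)
  qed
  also have "?s * \<phi> (1 - qq ^ 2) + ?t = \<phi> (1 - qq ^ (2 * Suc (Suc b)))"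
    by (simp add: phi_mult[symmetric] phi_add[symmetric] algebra_simps power_add[symmetric])
  finally show ?case .
qed

lemma relB:
  assumes i: "i \<in> {1..n}"
  shows "\<beta> i ^ Suc a * \<beta>s i = \<phi> (qq ^ (2 * Suc a)) * (\<beta>s i * \<beta> i ^ Suc a) + \<phi> (1 - qq ^ (2 * Suc a)) * \<beta> i ^ a"
proof (induction a)
  case 0
  then show ?case using rel[OF i] by (simp add: mult.assoc)
next
  case (Suc a)
  let ?s = "\<phi> (qq ^ (2 * Suc a))" and ?t = "\<phi> (1 - qq ^ (2 * Suc a))"
  have "\<beta> i ^ Suc (Suc a) * \<beta>s i = \<beta> i * (\<beta> i ^ Suc a * \<beta>s i)"
    by (simp only: power_Suc[of _ "Suc a"] mult.assoc)
  also have "\<dots> = \<beta> i * (?s * (\<beta>s i * \<beta> i ^ Suc a) + ?t * \<beta> i ^ a)"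
    by (simp only: Suc)
  also have "\<dots> = ?s * ((\<beta> i * \<beta>s i) * \<beta> i ^ Suc a) + ?t * \<beta> i ^ Suc a"
    by (simp add: distrib_left mult.assoc phi_lc del: power_Suc) (simp add: power_Suc)
  also have "\<dots> = ?s * ((\<phi> (qq ^ 2) * (\<beta>s i * \<beta> i) + \<phi> (1 - qq ^ 2)) * \<beta> i ^ Suc a) + ?t * \<beta> i ^ Suc a"
    using rel[OF i] by (simp add: mult.assoc)
  also have "\<dots> = (?s * \<phi> (qq ^ 2)) * ((\<beta>s i * \<beta> i) * \<beta> i ^ Suc a) + (?s * \<phi> (1 - qq ^ 2) + ?t) * \<beta> i ^ Suc a"
    unfolding hl2 by (simp only: distrib_left distrib_right mult.assoc add.assoc)
  also have "(\<beta>s i * \<beta> i) * \<beta> i ^ Suc a = \<beta>s i * \<beta> i ^ Suc (Suc a)"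
    by (simp only: power_Suc[of "\<beta> i" "Suc a"] mult.assoc)
  also have "?s * \<phi> (qq ^ 2) = \<phi> (qq ^ (2 * Suc (Suc a)))"
  proof -
    have "2 * Suc (Suc a) = 2 * Suc a + 2" by simp
    thus ?thesis by (simp only: phi_mult[symmetric] power_add)
  qed
  also have "?s * \<phi> (1 - qq ^ 2) + ?t = \<phi> (1 - qq ^ (2 * Suc (Suc a)))"
    by (simp add: phi_mult[symmetric] phi_add[symmetric] algebra_simps power_add[symmetric])
  finally show ?case .
qed

definition D :: "nat \<Rightarrow> nat \<Rightarrow> nat \<Rightarrow> 'a" where
  "D i a b = \<beta> i ^ a * \<beta>s i ^ b - \<beta> i ^ Suc a * \<beta>s i ^ Suc b"

lemma scal_facts:
  fixes m :: nat
  defines "s \<equiv> \<phi> (qq ^ m)" and "t \<equiv> \<phi> (1 - qq ^ m)" and "u \<equiv> \<phi> (inverse (qq ^ m))"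
  shows "u * s = 1" "s * u = 1" "t = 1 - s" "\<phi> ((1 - qq ^ m) / qq ^ m) = t * u" "u * t = t * u"
proof -
  have nz: "qq ^ m \<noteq> 0" using qq_neq0 by simp
  show "u * s = 1" unfolding u_def s_def by (rule phi_inv[OF nz])
  show "s * u = 1" unfolding u_def s_def using nz by (simp flip: phi_mult add: phi_one)
  show "t = 1 - s" unfolding t_def s_def by (simp add: phi_diff phi_one)
  show "\<phi> ((1 - qq ^ m) / qq ^ m) = t * u" unfolding t_def u_def by (simp add: divide_inverse phi_mult)
  show "u * t = t * u" unfolding t_def u_def by (rule phi_central)
qed

lemma siteA:
  assumes i: "i \<in> {1..n}"
  shows "\<beta> i ^ a * (\<beta>s i ^ Suc b * \<beta> i - \<beta> i * \<beta>s i ^ Suc b) = - (\<phi> (eps (Suc b)) * D i a b)"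
proof -
  let ?m = "2 * Suc b"
  define s where "s = \<phi> (qq ^ ?m)"
  define t where "t = \<phi> (1 - qq ^ ?m)"
  define u where "u = \<phi> (inverse (qq ^ ?m))"
  note sf = scal_facts[of ?m, folded s_def t_def u_def]
  define X where "X = \<beta> i ^ a * (\<beta>s i ^ Suc b * \<beta> i)"
  define Y where "Y = \<beta> i ^ Suc a * \<beta>s i ^ Suc b"
  define Z where "Z = \<beta> i ^ a * \<beta>s i ^ b"
  have "Y = \<beta> i ^ a * (\<beta> i * \<beta>s i ^ Suc b)" unfolding Y_def
    by (metis mult.assoc power_Suc2)
  also have "\<dots> = s * X + t * Z"
    unfolding relA[OF i] X_def Z_def s_def t_def by (simp add: distrib_left phi_lc)
  finally have hY: "Y = s * X + t * Z" .
  have "u * Y = (u * s) * X + u * t * Z" by (simp add: hY distrib_left mult.assoc)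
  hence hX: "X = u * Y - u * t * Z" using sf by simp
  have lhs: "\<beta> i ^ a * (\<beta>s i ^ Suc b * \<beta> i - \<beta> i * \<beta>s i ^ Suc b) = X - Y"
    unfolding X_def Y_def by (simp add: right_diff_distrib mult.assoc del: power_Suc) (metis mult.assoc power_Suc2)
  have "t * u * Y = (u - s * u) * Y" using sf(3) by (simp add: left_diff_distrib)
  also have "\<dots> = u * Y - Y" using sf(2) by (simp add: left_diff_distrib)
  finally have tuY: "t * u * Y = u * Y - Y" .
  have e1: "t * u * (Z - Y) = t * u * Z - (u * Y - Y)" by (simp only: right_diff_distrib tuY)
  have e2: "X = u * Y - t * u * Z" using hX sf(5) by metis
  have "- (\<phi> (eps (Suc b)) * D i a b) = - (t * u * (Z - Y))"
    unfolding eps_def D_def Y_def Z_def using sf by simp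
  also have "\<dots> = X - Y" unfolding e1 e2 by (simp add: algebra_simps)
  finally show ?thesis using lhs by simp
qed

lemma siteB:
  assumes i: "i \<in> {1..n}"
  shows "(\<beta> i ^ Suc a * \<beta>s i - \<beta>s i * \<beta> i ^ Suc a) * \<beta>s i ^ b = \<phi> (eps (Suc a)) * D i a b"
proof -
  let ?m = "2 * Suc a"
  define s where "s = \<phi> (qq ^ ?m)"
  define t where "t = \<phi> (1 - qq ^ ?m)"
  define u where "u = \<phi> (inverse (qq ^ ?m))"
  note sf = scal_facts[of ?m, folded s_def t_def u_def]
  define X where "X = \<beta>s i * \<beta> i ^ Suc a * \<beta>s i ^ b"
  define Y where "Y = \<beta> i ^ Suc a * \<beta>s i ^ Suc b"
  define Z where "Z = \<beta> i ^ a * \<beta>s i ^ b"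
  have "Y = (\<beta> i ^ Suc a * \<beta>s i) * \<beta>s i ^ b" unfolding Y_def
    by (simp only: power_Suc[of "\<beta>s i" b] mult.assoc)
  also have "\<dots> = s * X + t * Z"
    unfolding relB[OF i] X_def Z_def s_def t_def by (simp add: distrib_right mult.assoc)
  finally have hY: "Y = s * X + t * Z" .
  have "u * Y = (u * s) * X + u * t * Z" by (simp add: hY distrib_left mult.assoc)
  hence hX: "X = u * Y - u * t * Z" using sf by simp
  have lhs: "(\<beta> i ^ Suc a * \<beta>s i - \<beta>s i * \<beta> i ^ Suc a) * \<beta>s i ^ b = Y - X"
    unfolding X_def Y_def by (simp add: left_diff_distrib mult.assoc del: power_Suc) (simp add: power_Suc)
  have "t * u * Y = (u - s * u) * Y" using sf(3) by (simp add: left_diff_distrib)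
  also have "\<dots> = u * Y - Y" using sf(2) by (simp add: left_diff_distrib)
  finally have tuY: "t * u * Y = u * Y - Y" .
  have e1: "t * u * (Z - Y) = t * u * Z - (u * Y - Y)" by (simp only: right_diff_distrib tuY)
  have e2: "X = u * Y - t * u * Z" using hX sf(5) by metis
  have "\<phi> (eps (Suc a)) * D i a b = t * u * (Z - Y)"
    unfolding eps_def D_def Y_def Z_def using sf by simp
  also have "\<dots> = Y - X" unfolding e1 e2 by (simp add: algebra_simps)
  finally show ?thesis using lhs by simp
qed

definition F :: "(nat \<Rightarrow> nat) \<Rightarrow> nat \<Rightarrow> 'a" where
  "F \<alpha> k = \<beta> k ^ \<alpha> k * \<beta>s k ^ \<alpha> (site_pred n k)"

definition PP :: "(nat \<Rightarrow> 'a) \<Rightarrow> 'a" where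
  "PP f = prod_list (map f (rev [1..<n+1]))"

lemma Lst: "distinct (rev [1..<n+1])" "set (rev [1..<n+1]) = {1..n}"
  by auto

lemma F_loc: "F \<alpha> k \<in> loc \<beta> \<beta>s k"
  unfolding F_def by (intro loc_mult loc_pow loc.intros)

lemma D_loc: "D k a b \<in> loc \<beta> \<beta>s k"
  unfolding D_def by (intro loc_diff loc_mult loc_pow loc.intros)

lemma comm_hyp:
  assumes "i \<in> {1..n}" "x \<in> loc \<beta> \<beta>s i" "\<forall>k\<in>{1..n}. k \<noteq> i \<longrightarrow> f k \<in> loc \<beta> \<beta>s k"
  shows "\<forall>k\<in>set (rev [1..<n+1]). k \<noteq> i \<longrightarrow> x * f k = f k * x"
proof (intro ballI impI)
  fix k assume k: "k \<in> set (rev [1..<n+1])" and ki: "k \<noteq> i"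
  hence k': "k \<in> {1..n}" by auto
  have "f k * x = x * f k"
    by (rule loc_comm[OF assms(1) k' ki[symmetric] _ assms(2)]) (use assms(3) k' ki in blast)
  thus "x * f k = f k * x" by simp
qed

lemma mono_aux:
  assumes "1 \<le> m" "m \<le> n"
  shows "\<beta> m ^ y * prod_list (map (\<lambda>i. (\<beta> i * \<beta>s (i + 1)) ^ \<alpha> i) (rev [1..<m])) =
    prod_list (map (\<lambda>k. (if k = m then \<beta> k ^ y else \<beta> k ^ \<alpha> k) * (if k = 1 then 1 else \<beta>s k ^ \<alpha> (k - 1))) (rev [1..<m+1]))"
  using assms
proof (induction m arbitrary: y rule: nat_induct_at_least)
  case base
  then show ?case by (simp add: upt_Suc)
next
  case (Suc m)
  let ?g = "\<lambda>i. (\<beta> i * \<beta>s (i + 1)) ^ \<alpha> i"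
  let ?R = "prod_list (map ?g (rev [1..<m]))"
  have r1: "rev [1..<Suc m] = m # rev [1..<m]" using Suc.hyps by (simp add: upt_Suc)
  have r2: "rev [1..<Suc m + 1] = Suc m # rev [1..<m + 1]" by (simp add: upt_Suc)
  have mn: "m \<in> {1..n}" "Suc m \<in> {1..n}" using Suc by auto
  have c1: "\<beta> m * \<beta>s (Suc m) = \<beta>s (Suc m) * \<beta> m" using com_b_bs[OF mn] by simp
  have c2: "\<beta> m ^ \<alpha> m * \<beta>s (Suc m) ^ \<alpha> m = \<beta>s (Suc m) ^ \<alpha> m * \<beta> m ^ \<alpha> m"
    using loc_comm[OF mn(2) mn(1) _ loc_pow[OF loc_b] loc_pow[OF loc_bs]] by simp
  have "\<beta> (Suc m) ^ y * prod_list (map ?g (rev [1..<Suc m])) =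
        \<beta> (Suc m) ^ y * (\<beta> m ^ \<alpha> m * \<beta>s (Suc m) ^ \<alpha> m * ?R)"
    unfolding r1 by (simp add: power_mult_comm[OF c1])
  also have "\<dots> = (\<beta> (Suc m) ^ y * \<beta>s (Suc m) ^ \<alpha> m) * (\<beta> m ^ \<alpha> m * ?R)"
    by (simp add: c2 mult.assoc)
  also have "\<beta> m ^ \<alpha> m * ?R = prod_list (map (\<lambda>k. (if k = m then \<beta> k ^ \<alpha> m else \<beta> k ^ \<alpha> k) * (if k = 1 then 1 else \<beta>s k ^ \<alpha> (k - 1))) (rev [1..<m+1]))"
    using Suc by simp
  also have "\<dots> = prod_list (map (\<lambda>k. (if k = Suc m then \<beta> k ^ y else \<beta> k ^ \<alpha> k) * (if k = 1 then 1 else \<beta>s k ^ \<alpha> (k - 1))) (rev [1..<m+1]))"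
    by (intro arg_cong[where f=prod_list] map_cong) auto
  finally show ?case using Suc.hyps by (simp only: r2) simp
qed

lemma mono_eq:
  "\<beta> n ^ \<alpha> n * prod_list (map (\<lambda>i. (\<beta> i * \<beta>s (i + 1)) ^ \<alpha> i) (rev [1..<n])) * \<beta>s 1 ^ \<alpha> n = PP (F \<alpha>)"
proof -
  let ?h = "\<lambda>k. (if k = n then \<beta> k ^ \<alpha> n else \<beta> k ^ \<alpha> k) * (if k = 1 then 1 else \<beta>s k ^ \<alpha> (k - 1))"
  have "[1..<n+1] = 1 # [Suc 1..<n+1]" by (rule upt_conv_Cons) (use n1 in simp)
  hence r: "rev [1..<n+1] = rev [Suc 1..<n+1] @ [1]" by (simp only: rev.simps)
  have h1: "prod_list (map ?h (rev [Suc 1..<n+1])) = prod_list (map (F \<alpha>) (rev [Suc 1..<n+1]))"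
    by (intro arg_cong[where f=prod_list] map_cong refl) (auto simp: F_def site_pred_def simp del: upt_Suc)
  have h2: "?h 1 * \<beta>s 1 ^ \<alpha> n = F \<alpha> 1" by (simp add: F_def site_pred_def)
  have "\<beta> n ^ \<alpha> n * prod_list (map (\<lambda>i. (\<beta> i * \<beta>s (i + 1)) ^ \<alpha> i) (rev [1..<n])) * \<beta>s 1 ^ \<alpha> n
      = prod_list (map ?h (rev [1..<n+1])) * \<beta>s 1 ^ \<alpha> n"
    by (simp only: mono_aux[OF n1 order_refl, of "\<alpha> n" \<alpha>])
  also have "\<dots> = prod_list (map ?h (rev [Suc 1..<n+1])) * (?h 1 * \<beta>s 1 ^ \<alpha> n)"
    by (simp only: r map_append prod_list.append list.map prod_list.Cons prod_list.Nil mult_1_right mult.assoc)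
  also have "\<dots> = prod_list (map (F \<alpha>) (rev [Suc 1..<n+1])) * F \<alpha> 1"
    by (simp only: h1 h2)
  also have "\<dots> = PP (F \<alpha>)"
    unfolding PP_def by (simp only: r map_append prod_list.append list.map prod_list.Cons prod_list.Nil mult_1_right)
  finally show ?thesis .
qed

definition Cw :: "(nat \<Rightarrow> nat) \<Rightarrow> Cq" where
  "Cw \<alpha> = (\<Prod>i=1..n. qq ^ (\<alpha> i * (\<alpha> i + 1))) / (\<Prod>i=1..n. qpoch (\<alpha> i))"

lemma Qc_eq: "Qminus_coeff n \<phi> \<beta> \<beta>s r = (\<Sum>\<alpha>\<in>compositions n r. \<phi> (Cw \<alpha>) * PP (F \<alpha>))"
  unfolding Qminus_coeff_def Cw_def using mono_eq by simp

lemma PP_upd_zero: "i \<in> {1..n} \<Longrightarrow> PP (f(i := 0)) = 0"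
  using pl_scal[OF Lst(1), of i 0 f 0] Lst(2) unfolding PP_def by simp

lemma PP_scal: "i \<in> {1..n} \<Longrightarrow> PP (f(i := \<phi> c * u)) = \<phi> c * PP (f(i := u))"
  using pl_scal[OF Lst(1), of i "\<phi> c" f u] Lst(2) phi_central unfolding PP_def by simp

lemma PP_diff: "i \<in> {1..n} \<Longrightarrow> PP (f(i := u - v)) = PP (f(i := u)) - PP (f(i := v))"
  using pl_diff[OF Lst(1), of i f u v] Lst(2) unfolding PP_def by simp

lemma PP_left:
  assumes "i \<in> {1..n}" "x \<in> loc \<beta> \<beta>s i" "\<forall>k\<in>{1..n}. k \<noteq> i \<longrightarrow> f k \<in> loc \<beta> \<beta>s k"
  shows "x * PP f = PP (f(i := x * f i))"
  using pl_mult_left[OF Lst(1), of i x f] comm_hyp[OF assms] assms(1) Lst(2) unfolding PP_def by simp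

lemma PP_right:
  assumes "i \<in> {1..n}" "x \<in> loc \<beta> \<beta>s i" "\<forall>k\<in>{1..n}. k \<noteq> i \<longrightarrow> f k \<in> loc \<beta> \<beta>s k"
  shows "PP f * x = PP (f(i := f i * x))"
  using pl_mult_right[OF Lst(1), of i x f] comm_hyp[OF assms] assms(1) Lst(2) unfolding PP_def by simp

lemma PP_cong: "(\<forall>k\<in>{1..n}. f k = g k) \<Longrightarrow> PP f = PP g"
  unfolding PP_def by (intro arg_cong[where f=prod_list] map_cong) auto

lemma comm_I:
  assumes j: "j \<in> {1..n}"
  shows "PP (F \<alpha>) * \<beta> j - \<beta> j * PP (F \<alpha>) =
    (if \<alpha> (site_pred n j) = 0 then 0
     else - (\<phi> (eps (\<alpha> (site_pred n j))) * PP ((F \<alpha>)(j := D j (\<alpha> j) (\<alpha> (site_pred n j) - 1)))))"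
proof -
  let ?p = "site_pred n j"
  have fl: "\<forall>k\<in>{1..n}. k \<noteq> j \<longrightarrow> F \<alpha> k \<in> loc \<beta> \<beta>s k" using F_loc by blast
  have "PP (F \<alpha>) * \<beta> j - \<beta> j * PP (F \<alpha>) = PP ((F \<alpha>)(j := F \<alpha> j * \<beta> j - \<beta> j * F \<alpha> j))"
    unfolding PP_diff[OF j] PP_right[OF j loc_b fl] PP_left[OF j loc_b fl] ..
  also have "F \<alpha> j * \<beta> j - \<beta> j * F \<alpha> j = \<beta> j ^ \<alpha> j * (\<beta>s j ^ \<alpha> ?p * \<beta> j - \<beta> j * \<beta>s j ^ \<alpha> ?p)"
    unfolding F_def by (simp add: right_diff_distrib mult.assoc power_commutes flip: mult.assoc)
  finally have e: "PP (F \<alpha>) * \<beta> j - \<beta> j * PP (F \<alpha>) = PP ((F \<alpha>)(j := \<beta> j ^ \<alpha> j * (\<beta>s j ^ \<alpha> ?p * \<beta> j - \<beta> j * \<beta>s j ^ \<alpha> ?p)))" .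
  show ?thesis
  proof (cases "\<alpha> ?p")
    case 0
    then show ?thesis using e PP_upd_zero[OF j] by simp
  next
    case (Suc b)
    have m: "- (\<phi> (eps (Suc b)) * D j (\<alpha> j) b) = \<phi> (- eps (Suc b)) * D j (\<alpha> j) b"
      by (simp add: phi_minus)
    have "PP (F \<alpha>) * \<beta> j - \<beta> j * PP (F \<alpha>) = PP ((F \<alpha>)(j := \<phi> (- eps (Suc b)) * D j (\<alpha> j) b))"
      using e Suc siteA[OF j, of "\<alpha> j" b] m by simp
    also have "\<dots> = \<phi> (- eps (Suc b)) * PP ((F \<alpha>)(j := D j (\<alpha> j) b))" by (rule PP_scal[OF j])
    finally show ?thesis using Suc by (simp add: phi_minus)
  qed
qed

lemma comm_II:
  assumes j: "j \<in> {1..n}"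
  shows "PP (F \<alpha>) * \<beta>s j - \<beta>s j * PP (F \<alpha>) =
    (if \<alpha> j = 0 then 0
     else \<phi> (eps (\<alpha> j)) * PP ((F \<alpha>)(j := D j (\<alpha> j - 1) (\<alpha> (site_pred n j)))))"
proof -
  let ?p = "site_pred n j"
  have fl: "\<forall>k\<in>{1..n}. k \<noteq> j \<longrightarrow> F \<alpha> k \<in> loc \<beta> \<beta>s k" using F_loc by blast
  have "PP (F \<alpha>) * \<beta>s j - \<beta>s j * PP (F \<alpha>) = PP ((F \<alpha>)(j := F \<alpha> j * \<beta>s j - \<beta>s j * F \<alpha> j))"
    unfolding PP_diff[OF j] PP_right[OF j loc_bs fl] PP_left[OF j loc_bs fl] ..
  also have "F \<alpha> j * \<beta>s j - \<beta>s j * F \<alpha> j = (\<beta> j ^ \<alpha> j * \<beta>s j - \<beta>s j * \<beta> j ^ \<alpha> j) * \<beta>s j ^ \<alpha> ?p"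
    unfolding F_def by (simp add: left_diff_distrib mult.assoc power_commutes)
  finally have e: "PP (F \<alpha>) * \<beta>s j - \<beta>s j * PP (F \<alpha>) = PP ((F \<alpha>)(j := (\<beta> j ^ \<alpha> j * \<beta>s j - \<beta>s j * \<beta> j ^ \<alpha> j) * \<beta>s j ^ \<alpha> ?p))" .
  show ?thesis
  proof (cases "\<alpha> j")
    case 0
    then show ?thesis using e PP_upd_zero[OF j] by simp
  next
    case (Suc a)
    then show ?thesis using e siteB[OF j, of a "\<alpha> ?p"] PP_scal[OF j] by simp
  qed
qed

lemma inner:
  assumes j: "j \<in> {1..n}"
  shows "PP (F \<gamma>) - \<beta> j * PP (F \<gamma>) * \<beta>s j = PP ((F \<gamma>)(j := D j (\<gamma> j) (\<gamma> (site_pred n j))))"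
proof -
  have fl: "\<forall>k\<in>{1..n}. k \<noteq> j \<longrightarrow> F \<gamma> k \<in> loc \<beta> \<beta>s k" using F_loc by blast
  have fl2: "\<forall>k\<in>{1..n}. k \<noteq> j \<longrightarrow> ((F \<gamma>)(j := \<beta> j * F \<gamma> j)) k \<in> loc \<beta> \<beta>s k" using F_loc by simp
  have "\<beta> j * PP (F \<gamma>) * \<beta>s j = PP ((F \<gamma>)(j := \<beta> j * F \<gamma> j * \<beta>s j))"
    unfolding PP_left[OF j loc_b fl] PP_right[OF j loc_bs fl2] by simp
  moreover have "PP (F \<gamma>) = PP ((F \<gamma>)(j := F \<gamma> j))" by simp
  ultimately have "PP (F \<gamma>) - \<beta> j * PP (F \<gamma>) * \<beta>s j = PP ((F \<gamma>)(j := F \<gamma> j - \<beta> j * F \<gamma> j * \<beta>s j))"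
    using PP_diff[OF j] by metis
  also have "F \<gamma> j - \<beta> j * F \<gamma> j * \<beta>s j = D j (\<gamma> j) (\<gamma> (site_pred n j))"
    unfolding F_def D_def by (simp add: mult.assoc power_commutes del: power_Suc) (simp add: power_Suc2 mult.assoc)
  finally show ?thesis .
qed

lemma rhs_I:
  assumes j: "j \<in> {1..n}"
  defines "p \<equiv> site_pred n j"
  shows "\<beta> p * (PP (F \<gamma>) - \<beta> j * PP (F \<gamma>) * \<beta>s j) =
    PP ((F (\<gamma>(p := Suc (\<gamma> p))))(j := D j ((\<gamma>(p := Suc (\<gamma> p))) j) ((\<gamma>(p := Suc (\<gamma> p))) p - 1)))"
proof -
  let ?a = "\<gamma>(p := Suc (\<gamma> p))"
  let ?f = "(F \<gamma>)(j := D j (\<gamma> j) (\<gamma> p))"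
  have pin: "p \<in> {1..n}" unfolding p_def using sp_in[OF j] .
  have fl: "\<forall>k\<in>{1..n}. k \<noteq> p \<longrightarrow> ?f k \<in> loc \<beta> \<beta>s k" using F_loc D_loc by simp
  have "\<beta> p * (PP (F \<gamma>) - \<beta> j * PP (F \<gamma>) * \<beta>s j) = PP (?f(p := \<beta> p * ?f p))"
    unfolding inner[OF j, folded p_def] PP_left[OF pin loc_b fl] ..
  also have "\<dots> = PP ((F ?a)(j := D j (?a j) (?a p - 1)))"
  proof (rule PP_cong, intro ballI)
    fix k assume k: "k \<in> {1..n}"
    show "(?f(p := \<beta> p * ?f p)) k = ((F ?a)(j := D j (?a j) (?a p - 1))) k"
    proof (cases "n = 1")
      case True
      hence pj: "p = j" using site_one[OF True j] p_def by simp
      have kj: "k = j" using k j True by simp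
      show ?thesis unfolding kj pj D_def
        by (simp add: right_diff_distrib mult.assoc del: power_Suc) (simp add: power_Suc mult.assoc)
    next
      case False
      hence n2: "2 \<le> n" using n1 by simp
      have pj: "p \<noteq> j" using sp_ne[OF n2 j] p_def by simp
      have ppp: "site_pred n p \<noteq> p" using sp_ne[OF n2 pin] .
      show ?thesis
      proof (cases "k = p")
        case True
        then show ?thesis using pj ppp by (simp add: F_def mult.assoc)
      next
        case False
        note kp = False
        show ?thesis
        proof (cases "k = j")
          case True
          then show ?thesis using pj by simp
        next
          case False
          have "site_pred n k \<noteq> p" using sp_inj[OF j k] False p_def by auto
          then show ?thesis using False kp by (simp add: F_def)
        qed
      qed
    qed
  qed
  finally show ?thesis .
qed

lemma rhs_II:
  assumes j: "j \<in> {1..n}"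
  defines "p \<equiv> site_pred n j" and "s \<equiv> site_succ n j"
  shows "(PP (F \<gamma>) - \<beta> j * PP (F \<gamma>) * \<beta>s j) * \<beta>s s =
    PP ((F (\<gamma>(j := Suc (\<gamma> j))))(j := D j ((\<gamma>(j := Suc (\<gamma> j))) j - 1) ((\<gamma>(j := Suc (\<gamma> j))) p)))"
proof -
  let ?a = "\<gamma>(j := Suc (\<gamma> j))"
  let ?f = "(F \<gamma>)(j := D j (\<gamma> j) (\<gamma> p))"
  have sin: "s \<in> {1..n}" unfolding s_def using ss_in[OF j] .
  have fl: "\<forall>k\<in>{1..n}. k \<noteq> s \<longrightarrow> ?f k \<in> loc \<beta> \<beta>s k" using F_loc D_loc by simp
  have "(PP (F \<gamma>) - \<beta> j * PP (F \<gamma>) * \<beta>s j) * \<beta>s s = PP (?f(s := ?f s * \<beta>s s))"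
    unfolding inner[OF j, folded p_def] PP_right[OF sin loc_bs fl] ..
  also have "\<dots> = PP ((F ?a)(j := D j (?a j - 1) (?a p)))"
  proof (rule PP_cong, intro ballI)
    fix k assume k: "k \<in> {1..n}"
    show "(?f(s := ?f s * \<beta>s s)) k = ((F ?a)(j := D j (?a j - 1) (?a p))) k"
    proof (cases "n = 1")
      case True
      hence pj: "p = j" "s = j" using site_one[OF True j] p_def s_def by simp_all
      have kj: "k = j" using k j True by simp
      show ?thesis unfolding kj pj D_def
        by (simp add: left_diff_distrib mult.assoc del: power_Suc) (simp add: power_commutes mult.assoc)
    next
      case False
      hence n2: "2 \<le> n" using n1 by simp
      have pj: "p \<noteq> j" using sp_ne[OF n2 j] p_def by simp
      have sj: "s \<noteq> j" using ss_ne[OF n2 j] s_def by simp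
      have sps: "site_pred n s = j" using sp_ss[OF j] s_def by simp
      show ?thesis
      proof (cases "k = s")
        case True
        then show ?thesis using pj sj sps by (simp add: F_def mult.assoc power_Suc2 del: power_Suc)
      next
        case False
        note ks = False
        show ?thesis
        proof (cases "k = j")
          case True
          then show ?thesis using pj sj by simp
        next
          case False
          have "site_pred n k \<noteq> j" using sp_inj[OF sin k] ks sps by auto
          then show ?thesis using False ks by (simp add: F_def)
        qed
      qed
    qed
  qed
  finally show ?thesis .
qed

lemma sum_comm: "(\<Sum>\<alpha>\<in>A. \<phi> (c \<alpha>) * X \<alpha>) * y - y * (\<Sum>\<alpha>\<in>A. \<phi> (c \<alpha>) * X \<alpha>) = (\<Sum>\<alpha>\<in>A. \<phi> (c \<alpha>) * (X \<alpha> * y - y * X \<alpha>))"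
  by (simp add: sum_distrib_right sum_distrib_left sum_subtractf[symmetric] right_diff_distrib phi_lc mult.assoc)

lemma sum_inner: "(\<Sum>\<alpha>\<in>A. \<phi> (c \<alpha>) * X \<alpha>) - b * (\<Sum>\<alpha>\<in>A. \<phi> (c \<alpha>) * X \<alpha>) * bs = (\<Sum>\<alpha>\<in>A. \<phi> (c \<alpha>) * (X \<alpha> - b * X \<alpha> * bs))"
  by (simp add: sum_distrib_right sum_distrib_left sum_subtractf[symmetric] right_diff_distrib phi_lc mult.assoc)

lemma sum_left: "y * (\<Sum>\<alpha>\<in>A. \<phi> (c \<alpha>) * X \<alpha>) = (\<Sum>\<alpha>\<in>A. \<phi> (c \<alpha>) * (y * X \<alpha>))"
  by (simp add: sum_distrib_left phi_lc)

lemma sum_right: "(\<Sum>\<alpha>\<in>A. \<phi> (c \<alpha>) * X \<alpha>) * y = (\<Sum>\<alpha>\<in>A. \<phi> (c \<alpha>) * (X \<alpha> * y))"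
  by (simp add: sum_distrib_right mult.assoc)

lemma Cw_step':
  assumes "i \<in> {1..n}"
  shows "\<phi> (Cw (\<gamma>(i := Suc (\<gamma> i)))) * \<phi> (eps (Suc (\<gamma> i))) = \<phi> (Cw \<gamma>)"
proof -
  have "Cw (\<gamma>(i := Suc (\<gamma> i))) * eps (Suc (\<gamma> i)) = Cw \<gamma>"
    unfolding Cw_def by (rule Cw_step[OF assms])
  thus ?thesis by (simp only: phi_mult[symmetric])
qed

abbreviation "Qc \<equiv> Qminus_coeff n \<phi> \<beta> \<beta>s"

lemma coef_I:
  assumes j: "j \<in> {1..n}"
  defines "p \<equiv> site_pred n j"
  shows "Qc r * \<beta> j - \<beta> j * Qc r = (if r = 0 then 0 else - (\<beta> p * (Qc (r - 1) - \<beta> j * Qc (r - 1) * \<beta>s j)))"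
proof -
  have pin: "p \<in> {1..n}" unfolding p_def using sp_in[OF j] .
  let ?G = "\<lambda>\<alpha>. PP ((F \<alpha>)(j := D j (\<alpha> j) (\<alpha> p - 1)))"
  let ?T = "\<lambda>\<alpha>. \<phi> (Cw \<alpha>) * (if \<alpha> p = 0 then 0 else - (\<phi> (eps (\<alpha> p)) * ?G \<alpha>))"
  have L: "Qc r * \<beta> j - \<beta> j * Qc r = (\<Sum>\<alpha>\<in>compositions n r. ?T \<alpha>)"
    unfolding Qc_eq sum_comm comm_I[OF j, folded p_def] ..
  show ?thesis
  proof (cases r)
    case 0
    have "\<forall>\<alpha>\<in>compositions n 0. \<alpha> p = 0"
      using pin by (auto simp: compositions_def)
    then show ?thesis using L 0 by simp
  next
    case (Suc r')
    have "(\<Sum>\<alpha>\<in>compositions n (Suc r'). ?T \<alpha>) = (\<Sum>\<gamma>\<in>compositions n r'. ?T (\<gamma>(p := Suc (\<gamma> p))))"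
      by (rule comp_reindex[OF pin]) simp
    also have "\<dots> = (\<Sum>\<gamma>\<in>compositions n r'. - (\<phi> (Cw \<gamma>) * ?G (\<gamma>(p := Suc (\<gamma> p)))))"
      by (intro sum.cong refl) (simp add: Cw_step'[OF pin] flip: mult.assoc)
    also have "\<dots> = - (\<Sum>\<gamma>\<in>compositions n r'. \<phi> (Cw \<gamma>) * (\<beta> p * (PP (F \<gamma>) - \<beta> j * PP (F \<gamma>) * \<beta>s j)))"
      unfolding rhs_I[OF j, folded p_def] by (simp add: sum_negf)
    also have "\<dots> = - (\<beta> p * (\<Sum>\<gamma>\<in>compositions n r'. \<phi> (Cw \<gamma>) * (PP (F \<gamma>) - \<beta> j * PP (F \<gamma>) * \<beta>s j)))"
      by (simp only: sum_left)
    also have "(\<Sum>\<gamma>\<in>compositions n r'. \<phi> (Cw \<gamma>) * (PP (F \<gamma>) - \<beta> j * PP (F \<gamma>) * \<beta>s j)) = Qc r' - \<beta> j * Qc r' * \<beta>s j"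
      by (simp only: Qc_eq sum_inner)
    finally show ?thesis using L Suc by simp
  qed
qed

lemma coef_II:
  assumes j: "j \<in> {1..n}"
  defines "p \<equiv> site_pred n j" and "s \<equiv> site_succ n j"
  shows "Qc r * \<beta>s j - \<beta>s j * Qc r = (if r = 0 then 0 else (Qc (r - 1) - \<beta> j * Qc (r - 1) * \<beta>s j) * \<beta>s s)"
proof -
  let ?G = "\<lambda>\<alpha>. PP ((F \<alpha>)(j := D j (\<alpha> j - 1) (\<alpha> p)))"
  let ?T = "\<lambda>\<alpha>. \<phi> (Cw \<alpha>) * (if \<alpha> j = 0 then 0 else \<phi> (eps (\<alpha> j)) * ?G \<alpha>)"
  have L: "Qc r * \<beta>s j - \<beta>s j * Qc r = (\<Sum>\<alpha>\<in>compositions n r. ?T \<alpha>)"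
    unfolding Qc_eq sum_comm comm_II[OF j, folded p_def] ..
  show ?thesis
  proof (cases r)
    case 0
    have "\<forall>\<alpha>\<in>compositions n 0. \<alpha> j = 0"
      using j by (auto simp: compositions_def)
    then show ?thesis using L 0 by simp
  next
    case (Suc r')
    have "(\<Sum>\<alpha>\<in>compositions n (Suc r'). ?T \<alpha>) = (\<Sum>\<gamma>\<in>compositions n r'. ?T (\<gamma>(j := Suc (\<gamma> j))))"
      by (rule comp_reindex[OF j]) simp
    also have "\<dots> = (\<Sum>\<gamma>\<in>compositions n r'. \<phi> (Cw \<gamma>) * ?G (\<gamma>(j := Suc (\<gamma> j))))"
      by (intro sum.cong refl) (simp add: Cw_step'[OF j] flip: mult.assoc)
    also have "\<dots> = (\<Sum>\<gamma>\<in>compositions n r'. \<phi> (Cw \<gamma>) * ((PP (F \<gamma>) - \<beta> j * PP (F \<gamma>) * \<beta>s j) * \<beta>s s))"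
      unfolding rhs_II[OF j, folded p_def s_def] ..
    also have "\<dots> = (\<Sum>\<gamma>\<in>compositions n r'. \<phi> (Cw \<gamma>) * (PP (F \<gamma>) - \<beta> j * PP (F \<gamma>) * \<beta>s j)) * \<beta>s s"
      by (simp only: sum_right)
    also have "(\<Sum>\<gamma>\<in>compositions n r'. \<phi> (Cw \<gamma>) * (PP (F \<gamma>) - \<beta> j * PP (F \<gamma>) * \<beta>s j)) = Qc r' - \<beta> j * Qc r' * \<beta>s j"
      by (simp only: Qc_eq sum_inner)
    finally show ?thesis using L Suc by simp
  qed
qed

end

theorem mainTheorem9:
  fixes n :: nat and \<phi> :: "Cq \<Rightarrow> 'a::ring_1" and \<beta> \<beta>s K Ki :: "nat \<Rightarrow> 'a" and j :: nat
  assumes "n \<ge> 1"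
    and "qboson_alg n \<phi> \<beta> \<beta>s K Ki"
    and "j \<in> {1..n}"
  defines "Q \<equiv> Qminus n \<phi> \<beta> \<beta>s"
  shows "Q * fps_const (\<beta> j) - fps_const (\<beta> j) * Q =
           - (fps_X * fps_const (\<beta> (site_pred n j)) *
              (Q - fps_const (\<beta> j) * Q * fps_const (\<beta>s j))) \<and>
         Q * fps_const (\<beta>s j) - fps_const (\<beta>s j) * Q =
           fps_X * (Q - fps_const (\<beta> j) * Q * fps_const (\<beta>s j)) *
              fps_const (\<beta>s (site_succ n j))"
proof -
  interpret qb n \<phi> \<beta> \<beta>s K Ki using assms by unfold_locales
  have Qn: "fps_nth Q m = Qminus_coeff n \<phi> \<beta> \<beta>s m" for m unfolding Q_def Qminus_def by simp
  let ?b = "\<beta> j" and ?bs = "\<beta>s j"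
  have R: "fps_nth (Q - fps_const ?b * Q * fps_const ?bs) k = Qminus_coeff n \<phi> \<beta> \<beta>s k - ?b * Qminus_coeff n \<phi> \<beta> \<beta>s k * ?bs" for k
    by (simp only: fps_sub_nth fps_mult_right_const_nth fps_mult_left_const_nth Qn)
  show ?thesis
  proof (intro conjI fps_ext)
    fix m
    have l: "fps_nth (Q * fps_const ?b - fps_const ?b * Q) m = Qminus_coeff n \<phi> \<beta> \<beta>s m * ?b - ?b * Qminus_coeff n \<phi> \<beta> \<beta>s m"
      by (simp only: fps_sub_nth fps_mult_right_const_nth fps_mult_left_const_nth Qn)
    have r: "fps_nth (- (fps_X * fps_const (\<beta> (site_pred n j)) * (Q - fps_const ?b * Q * fps_const ?bs))) m =
       - (if m = 0 then 0 else \<beta> (site_pred n j) * (Qminus_coeff n \<phi> \<beta> \<beta>s (m - 1) - ?b * Qminus_coeff n \<phi> \<beta> \<beta>s (m - 1) * ?bs))"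
      by (simp only: mult.assoc fps_neg_nth fps_X_mult_nth fps_mult_left_const_nth R) (simp add: mult.assoc Qn)
    show "fps_nth (Q * fps_const ?b - fps_const ?b * Q) m =
      fps_nth (- (fps_X * fps_const (\<beta> (site_pred n j)) * (Q - fps_const ?b * Q * fps_const ?bs))) m"
      unfolding l r coef_I[OF assms(3), of m] by simp
  next
    fix m
    have l: "fps_nth (Q * fps_const ?bs - fps_const ?bs * Q) m = Qminus_coeff n \<phi> \<beta> \<beta>s m * ?bs - ?bs * Qminus_coeff n \<phi> \<beta> \<beta>s m"
      by (simp only: fps_sub_nth fps_mult_right_const_nth fps_mult_left_const_nth Qn)
    have r: "fps_nth (fps_X * (Q - fps_const ?b * Q * fps_const ?bs) * fps_const (\<beta>s (site_succ n j))) m =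
       (if m = 0 then 0 else (Qminus_coeff n \<phi> \<beta> \<beta>s (m - 1) - ?b * Qminus_coeff n \<phi> \<beta> \<beta>s (m - 1) * ?bs)) * \<beta>s (site_succ n j)"
      by (simp only: fps_mult_right_const_nth fps_X_mult_nth R)
    show "fps_nth (Q * fps_const ?bs - fps_const ?bs * Q) m =
      fps_nth (fps_X * (Q - fps_const ?b * Q * fps_const ?bs) * fps_const (\<beta>s (site_succ n j))) m"
      unfolding l r coef_II[OF assms(3), of m] by simp
  qed
qed

end
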